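(* Let $j$ and $k$ be natural numbers, let $\nu$ be a non-zero real number, and let $q:\mathbb{R}^n\to\mathbb{R}$ be a polynomial with highest total degree $|\beta|$. Set $\lambda = \left\lceil \frac{|\beta|-1}{2j}\right\rceil$. Then $$Q(\mathbf{x}) = \sum_{p=0}^{\lambda} (-1)^p \binom{k+p-1}{p} \nu^{-p-k}\, \Delta^{jp} q(\mathbf{x})$$ satisfies $(\Delta^j + \nu)^k Q(\mathbf{x}) = q(\mathbf{x})$, where $\Delta=\sum_{i=1}^n\partial_{x_i}^2$.
   Context: $\lceil h\rceil$ is the least integer $\ge h$; $\Delta^{r}$ denotes $r$-fold application of the Laplacian, with $\Delta^0$ the identity. *)

theory Defs
  imports "HOL-Analysis.Analysis"
begin

text \<open>Points of R^n are modelled as vectors of type real^'n, for an arbitrary finite index type 'n.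
  Multi-indices are functions 'n => nat.\<close>

definition monomial_fun :: "('n::finite \<Rightarrow> nat) \<Rightarrow> real^'n \<Rightarrow> real" where
  "monomial_fun \<alpha> x = (\<Prod>i\<in>UNIV. (x $ i) ^ (\<alpha> i))"

definition total_deg :: "('n::finite \<Rightarrow> nat) \<Rightarrow> nat" where
  "total_deg \<alpha> = (\<Sum>i\<in>UNIV. \<alpha> i)"

definition poly_fun_of_degree :: "(real^'n::finite \<Rightarrow> real) \<Rightarrow> nat \<Rightarrow> bool" where
  "poly_fun_of_degree q b \<longleftrightarrow>
     (\<exists>A c. finite A \<and> (\<forall>\<alpha>\<in>A. c \<alpha> \<noteq> (0::real)) \<and>
        (\<forall>x. q x = (\<Sum>\<alpha>\<in>A. c \<alpha> * monomial_fun \<alpha> x)) \<and>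
        (\<forall>\<alpha>\<in>A. total_deg \<alpha> \<le> b) \<and> (\<exists>\<alpha>\<in>A. total_deg \<alpha> = b))"

definition partial_deriv :: "'n::finite \<Rightarrow> (real^'n \<Rightarrow> real) \<Rightarrow> real^'n \<Rightarrow> real" where
  "partial_deriv i f x = deriv (\<lambda>t. f (x + t *\<^sub>R axis i 1)) 0"

definition laplacian :: "(real^'n::finite \<Rightarrow> real) \<Rightarrow> real^'n \<Rightarrow> real" where
  "laplacian f x = (\<Sum>i\<in>UNIV. partial_deriv i (partial_deriv i f) x)"

end

theory Submission
  imports Defs
begin


lemma mono_line:
  "monomial_fun \<alpha> (x + t *\<^sub>R axis i 1) = (\<Prod>l\<in>UNIV-{i}. (x$l)^\<alpha> l) * (x$i + t)^(\<alpha> i)"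
proof -
  have "monomial_fun \<alpha> (x + t *\<^sub>R axis i 1) = (\<Prod>l\<in>UNIV. (x$l + (if l = i then t else 0))^\<alpha> l)"
    unfolding monomial_fun_def by (intro prod.cong) (auto simp: axis_def)
  also have "\<dots> = (x$i + t)^(\<alpha> i) * (\<Prod>l\<in>UNIV-{i}. (x$l + (if l = i then t else 0))^\<alpha> l)"
    by (subst prod.remove[of UNIV i]) auto
  also have "(\<Prod>l\<in>UNIV-{i}. (x$l + (if l = i then t else 0))^\<alpha> l) = (\<Prod>l\<in>UNIV-{i}. (x$l)^\<alpha> l)"
    by (intro prod.cong) auto
  finally show ?thesis by simp
qed

lemma mono_upd:
  "monomial_fun (\<alpha>(i:=m)) x = (\<Prod>l\<in>UNIV-{i}. (x$l)^\<alpha> l) * (x$i)^m"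
proof -
  have "monomial_fun (\<alpha>(i:=m)) x = (x$i)^m * (\<Prod>l\<in>UNIV-{i}. (x$l)^((\<alpha>(i:=m)) l))"
    unfolding monomial_fun_def by (subst prod.remove[of UNIV i]) auto
  also have "(\<Prod>l\<in>UNIV-{i}. (x$l)^((\<alpha>(i:=m)) l)) = (\<Prod>l\<in>UNIV-{i}. (x$l)^\<alpha> l)"
    by (intro prod.cong) auto
  finally show ?thesis by (simp only: mult.commute)
qed

lemma mono_deriv:
  "((\<lambda>t. monomial_fun \<alpha> (x + t *\<^sub>R axis i 1)) has_real_derivative
     (real (\<alpha> i) * monomial_fun (\<alpha>(i:=\<alpha> i - 1)) x)) (at 0)"
proof -
  have "((\<lambda>t. (\<Prod>l\<in>UNIV-{i}. (x$l)^\<alpha> l) * (x$i + t)^(\<alpha> i)) has_real_derivative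
     (\<Prod>l\<in>UNIV-{i}. (x$l)^\<alpha> l) * (real (\<alpha> i) * (x$i + 0)^(\<alpha> i - 1) * 1)) (at 0)"
    by (intro DERIV_cmult DERIV_power) (auto intro!: derivative_eq_intros)
  then show ?thesis by (simp add: mono_line mono_upd mult_ac)
qed

definition polyd :: "nat \<Rightarrow> (real^'n::finite \<Rightarrow> real) \<Rightarrow> bool" where
  "polyd d f \<longleftrightarrow> (\<exists>(A::('n \<Rightarrow> nat) set) c e. finite A \<and> (\<forall>a\<in>A. total_deg (e a) \<le> d) \<and>
      f = (\<lambda>x. \<Sum>a\<in>A. c a * monomial_fun (e a) x))"

lemma polyd_E:
  fixes f :: "real^'n::finite \<Rightarrow> real"
  assumes "polyd d f"
  obtains A c e where "finite (A::('n\<Rightarrow>nat) set)" "\<forall>a\<in>A. total_deg (e a) \<le> d"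
     "f = (\<lambda>x. \<Sum>a\<in>A. c a * monomial_fun (e a) x)"
  using assms unfolding polyd_def by (elim exE conjE) (rule that)

lemma polyd_line_deriv:
  assumes "finite A"
  shows "((\<lambda>t. \<Sum>a\<in>A. c a * monomial_fun (e a) (x + t *\<^sub>R axis i 1)) has_real_derivative
     (\<Sum>a\<in>A. c a * (real (e a i) * monomial_fun ((e a)(i:=e a i - 1)) x))) (at 0)"
  by (intro DERIV_sum DERIV_cmult mono_deriv)

lemma polyd_pd:
  assumes "finite A"
  shows "partial_deriv i (\<lambda>x. \<Sum>a\<in>A. c a * monomial_fun (e a) x) =
     (\<lambda>x. \<Sum>a\<in>{a\<in>A. e a i \<noteq> 0}. (c a * real (e a i)) * monomial_fun ((e a)(i:=e a i - 1)) x)"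
proof
  fix x
  have "partial_deriv i (\<lambda>x. \<Sum>a\<in>A. c a * monomial_fun (e a) x) x =
     (\<Sum>a\<in>A. c a * (real (e a i) * monomial_fun ((e a)(i:=e a i - 1)) x))"
    unfolding partial_deriv_def by (rule DERIV_imp_deriv[OF polyd_line_deriv[OF assms]])
  also have "\<dots> = (\<Sum>a\<in>{a\<in>A. e a i \<noteq> 0}. (c a * real (e a i)) * monomial_fun ((e a)(i:=e a i - 1)) x)"
    using assms by (intro sum.mono_neutral_cong_right) auto
  finally show "partial_deriv i (\<lambda>x. \<Sum>a\<in>A. c a * monomial_fun (e a) x) x = \<dots>" .
qed

lemma total_deg_upd:
  assumes "\<alpha> i \<noteq> 0"
  shows "total_deg (\<alpha>(i := \<alpha> i - 1)) = total_deg \<alpha> - 1"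
proof -
  have "total_deg \<alpha> = \<alpha> i + (\<Sum>l\<in>UNIV-{i}. \<alpha> l)"
    unfolding total_deg_def by (subst sum.remove[of UNIV i]) auto
  moreover have "total_deg (\<alpha>(i := \<alpha> i - 1)) = (\<alpha> i - 1) + (\<Sum>l\<in>UNIV-{i}. \<alpha> l)"
    unfolding total_deg_def by (subst sum.remove[of UNIV i]) auto
  ultimately show ?thesis using assms by simp
qed

lemma polyd_partial:
  fixes f :: "real^'n::finite \<Rightarrow> real"
  assumes "polyd d f" shows "polyd (d - 1) (partial_deriv i f)"
proof -
  obtain A c e where A: "finite (A::('n\<Rightarrow>nat) set)" "\<forall>a\<in>A. total_deg (e a) \<le> d"
     and f: "f = (\<lambda>x. \<Sum>a\<in>A. c a * monomial_fun (e a) x)"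
    using assms by (rule polyd_E)
  show ?thesis unfolding polyd_def f polyd_pd[OF A(1)]
    apply (rule exI[of _ "{a\<in>A. e a i \<noteq> 0}"])
    apply (rule exI[of _ "\<lambda>a. c a * real (e a i)"])
    apply (rule exI[of _ "\<lambda>a. (e a)(i:=e a i - 1)"])
    apply (intro conjI)
    subgoal using A(1) by simp
    subgoal
    proof
      fix a assume "a \<in> {a\<in>A. e a i \<noteq> 0}"
      then have a: "a \<in> A" and ne: "e a i \<noteq> 0" by auto
      have td: "total_deg (e a) \<le> d" using A(2) a by blast
      show "total_deg ((e a)(i := e a i - 1)) \<le> d - 1"
        using total_deg_upd[of "e a" i, OF ne] td diff_le_mono by metis
    qed
    subgoal by (rule refl)
    done
qed

lemma polyd_partial0:
  fixes f :: "real^'n::finite \<Rightarrow> real"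
  assumes "polyd 0 f" shows "partial_deriv i f = (\<lambda>x. 0)"
proof -
  obtain A c e where A: "finite (A::('n\<Rightarrow>nat) set)" "\<forall>a\<in>A. total_deg (e a) \<le> 0"
     and f: "f = (\<lambda>x. \<Sum>a\<in>A. c a * monomial_fun (e a) x)"
    using assms by (rule polyd_E)
  have "{a\<in>A. e a i \<noteq> 0} = {}" using A(2) by (auto simp: total_deg_def)
  then show ?thesis unfolding f polyd_pd[OF A(1)] by simp
qed

definition Dg :: "nat \<Rightarrow> ('n::finite \<Rightarrow> nat) set" where
  "Dg d = {\<alpha>. total_deg \<alpha> \<le> d}"

lemma finite_Dg: "finite (Dg d)"
proof -
  have "Dg d \<subseteq> (\<Pi>\<^sub>E i \<in> UNIV. {..d})"
  proof
    fix \<alpha> assume a: "\<alpha> \<in> Dg d"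
    have "\<alpha> i \<le> d" for i
    proof -
      have "\<alpha> i \<le> total_deg \<alpha>" unfolding total_deg_def by (rule member_le_sum) auto
      then show ?thesis using a unfolding Dg_def by simp
    qed
    then show "\<alpha> \<in> (\<Pi>\<^sub>E i \<in> UNIV. {..d})" by (simp add: PiE_iff)
  qed
  moreover have "finite (\<Pi>\<^sub>E i \<in> (UNIV::'a set). {..d})" by (rule finite_PiE) auto
  ultimately show ?thesis by (rule finite_subset)
qed

lemma polyd_canon:
  fixes f :: "real^'n::finite \<Rightarrow> real"
  shows "polyd d f \<longleftrightarrow> (\<exists>c. f = (\<lambda>x. \<Sum>\<alpha>\<in>Dg d. c \<alpha> * monomial_fun \<alpha> x))"
proof
  assume "polyd d f"
  then obtain A c e where A: "finite (A::('n\<Rightarrow>nat) set)" "\<forall>a\<in>A. total_deg (e a) \<le> d"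
     and f: "f = (\<lambda>x. \<Sum>a\<in>A. c a * monomial_fun (e a) x)"
    by (rule polyd_E)
  define c' where "c' \<alpha> = (\<Sum>a\<in>{a\<in>A. e a = \<alpha>}. c a)" for \<alpha>
  have "f x = (\<Sum>\<alpha>\<in>Dg d. c' \<alpha> * monomial_fun \<alpha> x)" for x
  proof -
    have "f x = (\<Sum>\<alpha>\<in>e ` A. \<Sum>a\<in>{a\<in>A. e a = \<alpha>}. c a * monomial_fun (e a) x)"
      unfolding f by (rule sum.image_gen[OF A(1)])
    also have "\<dots> = (\<Sum>\<alpha>\<in>e ` A. c' \<alpha> * monomial_fun \<alpha> x)"
      unfolding c'_def sum_distrib_right by (intro sum.cong) auto
    also have "\<dots> = (\<Sum>\<alpha>\<in>Dg d. c' \<alpha> * monomial_fun \<alpha> x)"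
    proof -
      have z: "c' \<alpha> = 0" if "\<alpha> \<notin> e ` A" for \<alpha>
      proof -
        have "{a\<in>A. e a = \<alpha>} = {}" using that by blast
        then show ?thesis unfolding c'_def by (simp only: sum.empty)
      qed
      show ?thesis using A by (intro sum.mono_neutral_left finite_Dg) (auto simp: Dg_def z)
    qed
    finally show ?thesis .
  qed
  then have "f = (\<lambda>x. \<Sum>\<alpha>\<in>Dg d. c' \<alpha> * monomial_fun \<alpha> x)" by (rule ext)
  then show "\<exists>c. f = (\<lambda>x. \<Sum>\<alpha>\<in>Dg d. c \<alpha> * monomial_fun \<alpha> x)" by (rule exI[of _ c'])
next
  assume "\<exists>c. f = (\<lambda>x. \<Sum>\<alpha>\<in>Dg d. c \<alpha> * monomial_fun \<alpha> x)"
  then obtain c where c: "f = (\<lambda>x. \<Sum>\<alpha>\<in>Dg d. c \<alpha> * monomial_fun \<alpha> x)" by (rule exE)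
  show "polyd d f" unfolding polyd_def
    apply (rule exI[of _ "Dg d"])
    apply (rule exI[of _ c])
    apply (rule exI[of _ "\<lambda>a. a"])
    using finite_Dg[of d] c by (auto simp: Dg_def)
qed

lemma polyd_add:
  assumes "polyd d f" "polyd d g" shows "polyd d (\<lambda>x. f x + g x)"
proof -
  obtain c where c: "f = (\<lambda>x. \<Sum>\<alpha>\<in>Dg d. c \<alpha> * monomial_fun \<alpha> x)" using assms(1) unfolding polyd_canon by (rule exE)
  obtain c' where c': "g = (\<lambda>x. \<Sum>\<alpha>\<in>Dg d. c' \<alpha> * monomial_fun \<alpha> x)" using assms(2) unfolding polyd_canon by (rule exE)
  have "(\<lambda>x. f x + g x) = (\<lambda>x. \<Sum>\<alpha>\<in>Dg d. (c \<alpha> + c' \<alpha>) * monomial_fun \<alpha> x)"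
    unfolding c c' distrib_right sum.distrib by (rule refl)
  then show ?thesis unfolding polyd_canon by (rule exI[of _ "\<lambda>\<alpha>. c \<alpha> + c' \<alpha>"])
qed

lemma polyd_zero: "polyd d (\<lambda>x. 0)"
  unfolding polyd_def by (rule exI[of _ "{}"]) auto

lemma polyd_sum:
  assumes "finite S" "\<And>p. p \<in> S \<Longrightarrow> polyd d (f p)"
  shows "polyd d (\<lambda>x. \<Sum>p\<in>S. f p x)"
  using assms
proof (induction S rule: finite_induct)
  case empty
  show ?case using polyd_zero by simp
next
  case (insert p S)
  then show ?case using polyd_add[of d "f p" "\<lambda>x. \<Sum>p\<in>S. f p x"] by simp
qed


lemma laplacian_eq: "laplacian f = (\<lambda>x. \<Sum>i\<in>UNIV. partial_deriv i (partial_deriv i f) x)"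
  by (rule ext) (simp add: laplacian_def)

lemma polyd_lap: "polyd d f \<Longrightarrow> polyd (d - 2) (laplacian f)"
proof -
  assume "polyd d f"
  then have "polyd (d - 1 - 1) (partial_deriv i (partial_deriv i f))" for i
    by (intro polyd_partial)
  moreover have "d - 1 - 1 = d - 2" by simp
  ultimately have "polyd (d - 2) (partial_deriv i (partial_deriv i f))" for i
    by metis
  then show ?thesis unfolding laplacian_eq by (intro polyd_sum) auto
qed

lemma polyd_lap0: "polyd d f \<Longrightarrow> d < 2 \<Longrightarrow> laplacian f = (\<lambda>x. 0)"
proof -
  assume "polyd d f" "d < 2"
  moreover have "d - 1 = 0" using \<open>d < 2\<close> by simp
  ultimately have "polyd 0 (partial_deriv i f)" for i using polyd_partial[of d f i] by simp
  then have "partial_deriv i (partial_deriv i f) = (\<lambda>x. 0)" for i by (rule polyd_partial0)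
  then show ?thesis unfolding laplacian_eq by simp
qed

lemma polyd_lapm:
  assumes "polyd d f"
  shows "polyd (d - 2*m) ((laplacian ^^ m) f) \<and> (d < 2*m \<longrightarrow> (laplacian ^^ m) f = (\<lambda>x. 0))"
proof (induction m)
  case 0
  then show ?case using assms by simp
next
  case (Suc m)
  then have P: "polyd (d - 2*m) ((laplacian ^^ m) f)" by blast
  have "polyd (d - 2*Suc m) ((laplacian ^^ Suc m) f)"
    using polyd_lap[OF P] by (simp add: diff_diff_add)
  moreover have "d < 2*Suc m \<longrightarrow> (laplacian ^^ Suc m) f = (\<lambda>x. 0)"
    using polyd_lap0[OF P] by auto
  ultimately show ?case by blast
qed

definition polyf :: "(real^'n::finite \<Rightarrow> real) \<Rightarrow> bool" where
  "polyf f \<longleftrightarrow> (\<exists>d. polyd d f)"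

lemma polyf_partial: "polyf f \<Longrightarrow> polyf (partial_deriv i f)"
  unfolding polyf_def using polyd_partial by blast

lemma polyf_lap: "polyf f \<Longrightarrow> polyf (laplacian f)"
  unfolding polyf_def using polyd_lap by blast

lemma polyf_lapm: "polyf f \<Longrightarrow> polyf ((laplacian ^^ m) f)"
  by (induction m) (auto simp: polyf_lap)

lemma polyf_line:
  fixes f :: "real^'n::finite \<Rightarrow> real"
  assumes "polyf f"
  shows "((\<lambda>t. f (x + t *\<^sub>R axis i 1)) has_real_derivative partial_deriv i f x) (at 0)"
proof -
  obtain d A c e where A: "finite (A::('n\<Rightarrow>nat) set)"
     and f: "f = (\<lambda>x. \<Sum>a\<in>A. c a * monomial_fun (e a) x)"
  proof -
    from assms obtain d where "polyd d f" unfolding polyf_def by (rule exE)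
    then show ?thesis by (rule polyd_E) (rule that)
  qed
  have D: "((\<lambda>t. f (x + t *\<^sub>R axis i 1)) has_real_derivative
     (\<Sum>a\<in>A. c a * (real (e a i) * monomial_fun ((e a)(i:=e a i - 1)) x))) (at 0)"
    unfolding f using polyd_line_deriv[OF A] by simp
  have "partial_deriv i f x = (\<Sum>a\<in>A. c a * (real (e a i) * monomial_fun ((e a)(i:=e a i - 1)) x))"
    unfolding partial_deriv_def by (rule DERIV_imp_deriv[OF D])
  then show ?thesis using D by simp
qed

lemma pd_linear:
  assumes "finite S" "\<And>p. p \<in> S \<Longrightarrow> polyf (f p)"
  shows "partial_deriv i (\<lambda>x. \<Sum>p\<in>S. a p * f p x) = (\<lambda>x. \<Sum>p\<in>S. a p * partial_deriv i (f p) x)"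
proof
  fix x
  have "((\<lambda>t. \<Sum>p\<in>S. a p * f p (x + t *\<^sub>R axis i 1)) has_real_derivative
          (\<Sum>p\<in>S. a p * partial_deriv i (f p) x)) (at 0)"
    using assms by (intro DERIV_sum DERIV_cmult polyf_line) auto
  then show "partial_deriv i (\<lambda>x. \<Sum>p\<in>S. a p * f p x) x = (\<Sum>p\<in>S. a p * partial_deriv i (f p) x)"
    unfolding partial_deriv_def by (rule DERIV_imp_deriv)
qed

lemma lap_linear:
  assumes "finite S" "\<And>p. p \<in> S \<Longrightarrow> polyf (f p)"
  shows "laplacian (\<lambda>x. \<Sum>p\<in>S. a p * f p x) = (\<lambda>x. \<Sum>p\<in>S. a p * laplacian (f p) x)"
proof -
  have "laplacian (\<lambda>x. \<Sum>p\<in>S. a p * f p x) =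
     (\<lambda>x. \<Sum>i\<in>UNIV. \<Sum>p\<in>S. a p * partial_deriv i (partial_deriv i (f p)) x)"
  proof -
    have "partial_deriv i (\<lambda>x. \<Sum>p\<in>S. a p * partial_deriv i (f p) x) =
        (\<lambda>x. \<Sum>p\<in>S. a p * partial_deriv i (partial_deriv i (f p)) x)" for i
      using assms by (intro pd_linear) (auto intro: polyf_partial)
    then show ?thesis unfolding laplacian_eq by (simp add: pd_linear[OF assms])
  qed
  also have "\<dots> = (\<lambda>x. \<Sum>p\<in>S. a p * laplacian (f p) x)"
    unfolding laplacian_def by (subst sum.swap) (simp add: sum_distrib_left)
  finally show ?thesis .
qed

lemma lapm_linear:
  assumes "finite S" "\<And>p. p \<in> S \<Longrightarrow> polyf (f p)"
  shows "(laplacian ^^ m) (\<lambda>x. \<Sum>p\<in>S. a p * f p x) = (\<lambda>x. \<Sum>p\<in>S. a p * (laplacian ^^ m) (f p) x)"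
proof (induction m)
  case 0 then show ?case by simp
next
  case (Suc m)
  then show ?case using assms by (simp add: lap_linear polyf_lapm)
qed

theorem corollary5p4:
  fixes j k b :: nat and \<nu> :: real and q :: "real^'n::finite \<Rightarrow> real"
  assumes "j \<ge> 1" and "k \<ge> 1" and "\<nu> \<noteq> 0"
    and "poly_fun_of_degree q b"
  defines "lam \<equiv> nat \<lceil>(real b - 1) / (2 * real j)\<rceil>"
  defines "Q \<equiv> (\<lambda>x. \<Sum>p = 0..lam. (-1) ^ p * real ((k + p - 1) choose p) * \<nu> powi (- (int p + int k))
                      * (laplacian ^^ (j * p)) q x)"
  shows "((\<lambda>f x. (laplacian ^^ j) f x + \<nu> * f x) ^^ k) Q = q"
proof -
  define w where "w = inverse \<nu>"
  have nw: "\<nu> * w = 1" using assms(3) by (simp add: w_def)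
  define g where "g p = (laplacian ^^ (j*p)) q" for p
  define cf where "cf k p = (-1)^p * real ((k + p - 1) choose p) * \<nu> powi (- (int p + int k))" for k p
  define QQ where "QQ k = (\<lambda>x. \<Sum>p\<in>{..lam}. cf k p * g p x)" for k
  define T where "T = (\<lambda>(f::real^'n \<Rightarrow> real) x. (laplacian ^^ j) f x + \<nu> * f x)"
  have Qeq: "Q = QQ k" unfolding Q_def QQ_def cf_def g_def atLeast0AtMost by simp
  have pw: "\<nu> powi (- (int p + int k)) = w ^ (p + k)" for p k
    by (metis of_nat_add power_int_minus power_int_of_nat power_inverse w_def)
  have cfw: "cf k p = (-1)^p * real ((k + p - 1) choose p) * w ^ (p + k)" for k p
    unfolding cf_def pw ..
  obtain A c where A: "finite A" "\<forall>x. q x = (\<Sum>\<alpha>\<in>A. c \<alpha> * monomial_fun \<alpha> x)"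
      "\<forall>\<alpha>\<in>A. total_deg \<alpha> \<le> b"
    using assms(4) unfolding poly_fun_of_degree_def by (elim exE conjE) (rule that)
  have qpoly: "polyd b q" unfolding polyd_def
    apply (rule exI[of _ A])
    apply (rule exI[of _ c])
    apply (rule exI[of _ "\<lambda>a. a"])
    apply (intro conjI)
    subgoal using A(1) by simp
    subgoal using A(3) by simp
    subgoal
    proof (rule ext)
      fix x show "q x = (\<Sum>a\<in>A. c a * monomial_fun a x)" using A(2) by (rule spec)
    qed
    done
  have qf: "polyf q" unfolding polyf_def using qpoly by (rule exI)
  have gpoly: "polyf (g p)" for p
    unfolding g_def by (rule polyf_lapm[OF qf])
  have gnext: "(laplacian ^^ j) (g p) = g (Suc p)" for p
    by (simp add: g_def funpow_add)
  have bnd: "b < 2 * (j * Suc lam)"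
  proof -
    have "(real b - 1) / (2 * real j) \<le> real lam"
      unfolding lam_def by (rule real_nat_ceiling_ge)
    then have "real b - 1 \<le> 2 * real j * real lam"
      using assms(1) by (simp add: divide_le_eq mult_ac)
    then have "real b < 2 * (real j * (real lam + 1))"
      using assms(1) by (simp add: algebra_simps)
    then show ?thesis by (metis of_nat_less_iff of_nat_mult of_nat_Suc of_nat_numeral add.commute)
  qed
  have gzero: "g (Suc lam) = (\<lambda>x. 0)"
  proof -
    have "b < 2 * (j * Suc lam) \<longrightarrow> (laplacian ^^ (j * Suc lam)) q = (\<lambda>x. 0)"
      using polyd_lapm[OF qpoly, of "j * Suc lam"] by (rule conjunct2)
    then show ?thesis unfolding g_def using bnd by (rule mp)
  qed
  have coef0: "\<nu> * cf (Suc k) 0 = cf k 0" for k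
  proof -
    have "\<nu> * cf (Suc k) 0 = (\<nu> * w) * w ^ k" unfolding cfw by (simp add: mult_ac)
    then show ?thesis using nw by (simp add: cfw)
  qed
  have coefS: "cf (Suc k) p + \<nu> * cf (Suc k) (Suc p) = cf k (Suc p)" for k p
  proof -
    have C: "real (Suc (k + p) choose Suc p) = real (k + p choose p) + real (k + p choose Suc p)"
      by simp
    have W: "\<nu> * w ^ (Suc p + Suc k) = w ^ (p + Suc k)" using nw
      by (simp add: mult.assoc[symmetric])
    have "cf (Suc k) p + \<nu> * cf (Suc k) (Suc p) =
       (-1)^p * real (k + p choose p) * w ^ (p + Suc k)
       - (-1)^p * real (Suc (k + p) choose Suc p) * (\<nu> * w ^ (Suc p + Suc k))"
      unfolding cfw by (simp add: mult_ac)
    also have "\<dots> = - ((-1)^p * real (k + p choose Suc p) * w ^ (p + Suc k))"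
      unfolding W C by (simp add: algebra_simps)
    also have "\<dots> = cf k (Suc p)" unfolding cfw by simp
    finally show ?thesis .
  qed
  have step: "T (QQ (Suc k)) = QQ k" for k
  proof
    fix x
    have L: "(laplacian ^^ j) (QQ (Suc k)) = (\<lambda>x. \<Sum>p\<in>{..lam}. cf (Suc k) p * g (Suc p) x)"
      unfolding QQ_def using gpoly by (subst lapm_linear) (auto simp: gnext)
    have S1: "(\<Sum>p\<in>{..lam}. cf (Suc k) p * g (Suc p) x) = (\<Sum>p<lam. cf (Suc k) p * g (Suc p) x)"
      by (simp add: lessThan_Suc_atMost[symmetric] gzero)
    have S2: "(\<Sum>p\<in>{..lam}. cf (Suc k) p * g p x) = cf (Suc k) 0 * g 0 x + (\<Sum>p<lam. cf (Suc k) (Suc p) * g (Suc p) x)"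
      by (rule sum.atMost_shift)
    have S3: "(\<Sum>p\<in>{..lam}. cf k p * g p x) = cf k 0 * g 0 x + (\<Sum>p<lam. cf k (Suc p) * g (Suc p) x)"
      by (rule sum.atMost_shift)
    have "T (QQ (Suc k)) x = (\<Sum>p<lam. cf (Suc k) p * g (Suc p) x) + \<nu> * (cf (Suc k) 0 * g 0 x + (\<Sum>p<lam. cf (Suc k) (Suc p) * g (Suc p) x))"
      unfolding T_def L S1 using S2 by (simp add: QQ_def)
    also have "\<dots> = (\<nu> * cf (Suc k) 0) * g 0 x + (\<Sum>p<lam. (cf (Suc k) p + \<nu> * cf (Suc k) (Suc p)) * g (Suc p) x)"
      by (simp add: algebra_simps sum.distrib sum_distrib_left)
    also have "\<dots> = QQ k x" unfolding coef0 coefS QQ_def S3 ..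
    finally show "T (QQ (Suc k)) x = QQ k x" .
  qed
  have base: "QQ 0 = q"
  proof
    fix x
    have "QQ 0 x = cf 0 0 * g 0 x + (\<Sum>p<lam. cf 0 (Suc p) * g (Suc p) x)"
      unfolding QQ_def by (rule sum.atMost_shift)
    also have "\<dots> = q x" by (simp add: cfw g_def binomial_eq_0)
    finally show "QQ 0 x = q x" .
  qed
  have "(T ^^ k) (QQ k) = q" for k
  proof (induction k)
    case 0 then show ?case by (simp add: base)
  next
    case (Suc k) then show ?case by (simp add: funpow_Suc_right step del: funpow.simps)
  qed
  then show ?thesis unfolding Qeq T_def .
qed

end
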